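(* Let $G=(V,E)$ be a 2-tree. Then $G$ contains no split independent set; that is, there is no set $S\subseteq V$ such that $S$ is independent in $G$ and the induced subgraph $\langle V\setminus S\rangle$ is either disconnected or isomorphic to $K_1$.
   Context: All graphs are finite, simple (no loops or multiple edges) and undirected. A 2-tree is a graph obtained from the triangle $K_3$ by repeatedly adding a new vertex adjacent to exactly the two endpoints of some existing edge. For $X\subseteq V$, $\langle X\rangle$ denotes the subgraph of $G$ induced by $X$. A set $S\subseteq V$ is a split independent set if $S$ is independent (no two vertices of $S$ are adjacent) and $\langle V\setminus S\rangle$ is either disconnected or a $K_1$. *)

theory Defs
  imports Main
begin

text \<open>A finite simple graph is given by a vertex set V and a set E of
  2-element subsets of V (undirected edges, no loops).\<close>

inductive two_tree :: "'a set \<Rightarrow> 'a set set \<Rightarrow> bool" where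
  triangle: "a \<noteq> b \<Longrightarrow> b \<noteq> c \<Longrightarrow> a \<noteq> c \<Longrightarrow>
     two_tree {a, b, c} {{a, b}, {b, c}, {a, c}}"
| add_vertex: "two_tree V E \<Longrightarrow> {u, w} \<in> E \<Longrightarrow> v \<notin> V \<Longrightarrow>
     two_tree (insert v V) (E \<union> {{v, u}, {v, w}})"

definition independent_set :: "'a set set \<Rightarrow> 'a set \<Rightarrow> bool" where
  "independent_set E S \<longleftrightarrow> (\<forall>x\<in>S. \<forall>y\<in>S. {x, y} \<notin> E)"

definition induced_adj :: "'a set set \<Rightarrow> 'a set \<Rightarrow> 'a \<Rightarrow> 'a \<Rightarrow> bool" where
  "induced_adj E X x y \<longleftrightarrow> x \<in> X \<and> y \<in> X \<and> {x, y} \<in> E"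

definition induced_disconnected :: "'a set set \<Rightarrow> 'a set \<Rightarrow> bool" where
  "induced_disconnected E X \<longleftrightarrow>
     (\<exists>x\<in>X. \<exists>y\<in>X. \<not> (induced_adj E X)\<^sup>*\<^sup>* x y)"

definition split_independent_set :: "'a set \<Rightarrow> 'a set set \<Rightarrow> 'a set \<Rightarrow> bool" where
  "split_independent_set V E S \<longleftrightarrow>
     S \<subseteq> V \<and> independent_set E S \<and>
     (induced_disconnected E (V - S) \<or> card (V - S) = 1)"

end

theory Submission
  imports Defs
begin

lemma lift_path:
  assumes "(induced_adj E X)\<^sup>*\<^sup>* x y" "E \<subseteq> E'" "X \<subseteq> X'"
  shows "(induced_adj E' X')\<^sup>*\<^sup>* x y"
  using assms(1)
proof (induction rule: rtranclp_induct)
  case base then show ?case by simp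
next
  case (step y z)
  then have "induced_adj E' X' y z" using assms(2,3) by (auto simp: induced_adj_def)
  with step show ?case by (meson rtranclp.rtrancl_into_rtrancl)
qed

lemma edges_sub0: "two_tree V E \<Longrightarrow> \<forall>e\<in>E. e \<subseteq> V"
  by (induction rule: two_tree.induct) auto

lemma edges_sub: "two_tree V E \<Longrightarrow> e \<in> E \<Longrightarrow> e \<subseteq> V"
  using edges_sub0 by blast

lemma has_triangle: "two_tree V E \<Longrightarrow> \<exists>a b c. a \<in> V \<and> b \<in> V \<and> c \<in> V \<and> a \<noteq> b \<and> b \<noteq> c \<and> a \<noteq> c
   \<and> {a,b} \<in> E \<and> {b,c} \<in> E \<and> {a,c} \<in> E"
  by (induction rule: two_tree.induct) blast+

lemma conn: "two_tree V E \<Longrightarrow> independent_set E S \<Longrightarrow>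
   \<forall>x\<in>V-S. \<forall>y\<in>V-S. (induced_adj E (V-S))\<^sup>*\<^sup>* x y"
proof (induction arbitrary: S rule: two_tree.induct)
  case (triangle a b c)
  show ?case
  proof (intro ballI)
    fix x y assume xy: "x \<in> {a,b,c} - S" "y \<in> {a,b,c} - S"
    show "(induced_adj {{a, b}, {b, c}, {a, c}} ({a, b, c} - S))\<^sup>*\<^sup>* x y"
    proof (cases "x = y")
      case True then show ?thesis by simp
    next
      case False
      then have "{x,y} \<in> {{a, b}, {b, c}, {a, c}}" using xy by (auto simp: insert_commute)
      then have "induced_adj {{a, b}, {b, c}, {a, c}} ({a, b, c} - S) x y"
        using xy by (simp add: induced_adj_def)
      then show ?thesis by blast
    qed
  qed
next
  case (add_vertex V E u w v)
  let ?E' = "E \<union> {{v, u}, {v, w}}"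
  let ?R = "induced_adj ?E' (insert v V - S)"
  have indS: "independent_set E (S - {v})" using add_vertex.prems
    by (auto simp: independent_set_def)
  note IH = add_vertex.IH[OF indS]
  show ?case
  proof (cases "v \<in> S")
    case True
    then have eq: "insert v V - S = V - (S - {v})" using add_vertex.hyps(3) by auto
    show ?thesis unfolding eq using IH lift_path[of E "V - (S - {v})" _ _ ?E'] by blast
  next
    case False
    then have eq: "insert v V - S = insert v (V - (S - {v}))" by auto
    have uwV: "u \<in> V" "w \<in> V" using edges_sub[OF add_vertex.hyps(1,2)] by auto
    have "u \<notin> S \<or> w \<notin> S" using add_vertex.prems add_vertex.hyps(2)
      unfolding independent_set_def by blast
    then obtain t where t: "t \<in> V" "t \<notin> S" "{v,t} \<in> ?E'" using uwV by blast
    have tv: "t \<noteq> v" using t add_vertex.hyps(3) by auto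
    have lift: "?R\<^sup>*\<^sup>* x y" if "x \<in> V - (S - {v})" "y \<in> V - (S - {v})" for x y
      using IH that lift_path[of E "V - (S - {v})" x y ?E' "insert v V - S"] eq by blast
    have e1: "?R v t" "?R t v" using t False by (auto simp: induced_adj_def insert_commute)
    have reach: "?R\<^sup>*\<^sup>* t z \<and> ?R\<^sup>*\<^sup>* z t" if "z \<in> insert v V - S" for z
    proof (cases "z = v")
      case True then show ?thesis using e1 by blast
    next
      case False
      then have "z \<in> V - (S - {v})" "t \<in> V - (S - {v})" using that t by auto
      then show ?thesis using lift by blast
    qed
    show ?thesis
    proof (intro ballI)
      fix x y assume "x \<in> insert v V - S" "y \<in> insert v V - S"
      then show "?R\<^sup>*\<^sup>* x y" using reach by (meson rtranclp_trans)
    qed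
  qed
qed

theorem mainTheorem1:
  fixes V :: "'a set" and E :: "'a set set"
  assumes "two_tree V E"
  shows "\<not> (\<exists>S. split_independent_set V E S)"
proof
  assume "\<exists>S. split_independent_set V E S"
  then obtain S where S: "S \<subseteq> V" "independent_set E S"
    "induced_disconnected E (V - S) \<or> card (V - S) = 1"
    unfolding split_independent_set_def by blast
  show False
  proof (cases "induced_disconnected E (V - S)")
    case True
    then show False using conn[OF assms S(2)] unfolding induced_disconnected_def by blast
  next
    case False
    then have "card (V - S) = 1" using S by blast
    then obtain x where x: "V - S = {x}" by (auto simp: card_Suc_eq)
    obtain a b c where abc: "a \<in> V" "b \<in> V" "c \<in> V" "a \<noteq> b" "b \<noteq> c" "a \<noteq> c"
      "{a,b} \<in> E" "{b,c} \<in> E" "{a,c} \<in> E" using has_triangle[OF assms] by blast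
    have "(a \<in> S \<and> b \<in> S) \<or> (b \<in> S \<and> c \<in> S) \<or> (a \<in> S \<and> c \<in> S)"
    proof -
      have "\<forall>z\<in>V. z \<noteq> x \<longrightarrow> z \<in> S" using x by blast
      then show ?thesis using abc by metis
    qed
    then show False using S(2) abc unfolding independent_set_def by blast
  qed
qed

end
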